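(* Let $L$ be an $R_0$-algebra and $k\in[0,1)$. If $\mu$ is an $(\in,\in\vee q_k)$-fuzzy fated filter of $L$ with $\mu(1)<\tfrac{1-k}{2}$, then $\mu$ is an $(\in,\in)$-fuzzy fated filter of $L$.
   Context: An $R_0$-algebra is a bounded distributive lattice $(L,\wedge,\vee,0,1)$ with an order-reversing involution $\neg$ and a binary operation $\to$ such that for all $x,y,z\in L$: $x\to y=\neg y\to\neg x$; $1\to x=x$; $(y\to z)\wedge((x\to y)\to(x\to z))=y\to z$; $x\to(y\to z)=y\to(x\to z)$; $x\to(y\vee z)=(x\to y)\vee(x\to z)$; $(x\to y)\vee((x\to y)\to(\neg x\vee y))=1$. For $x\in L$, $t\in(0,1]$ and a fuzzy subset $\mu:L\to[0,1]$: $x_t\in\mu$ iff $\mu(x)\ge t$; $x_t\,q_k\,\mu$ iff $\mu(x)+t+k>1$; $x_t\in\vee q_k\,\mu$ iff $x_t\in\mu$ or $x_t\,q_k\,\mu$. $\mu$ is an $(\in,\in\vee q_k)$-fuzzy fated filter of $L$ if (1) for all $x\in L$, $t\in(0,1]$: $x_t\in\mu\Rightarrow 1_t\in\vee q_k\,\mu$; and (2) for all $x,a,y\in L$, $t,s\in(0,1]$: if $(a\to((x\to y)\to x))_t\in\mu$ and $a_s\in\mu$ then $x_{\min\{t,s\}}\in\vee q_k\,\mu$. An $(\in,\in)$-fuzzy fated filter is defined in the same way with "$\in\vee q_k$" replaced by "$\in$" in the conclusions of (1) and (2). *)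

theory Defs
  imports Main "HOL.Real"
begin

definition R0_algebra ::
  "('a::{bounded_lattice, distrib_lattice} \<Rightarrow> 'a) \<Rightarrow> ('a \<Rightarrow> 'a \<Rightarrow> 'a) \<Rightarrow> bool" where
  "R0_algebra neg imp \<longleftrightarrow>
     (\<forall>x. neg (neg x) = x) \<and>
     (\<forall>x y. x \<le> y \<longrightarrow> neg y \<le> neg x) \<and>
     (\<forall>x y. imp x y = imp (neg y) (neg x)) \<and>
     (\<forall>x. imp top x = x) \<and>
     (\<forall>x y z. inf (imp y z) (imp (imp x y) (imp x z)) = imp y z) \<and>
     (\<forall>x y z. imp x (imp y z) = imp y (imp x z)) \<and>
     (\<forall>x y z. imp x (sup y z) = sup (imp x y) (imp x z)) \<and>
     (\<forall>x y. sup (imp x y) (imp (imp x y) (sup (neg x) y)) = top)"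

text \<open>Fuzzy point relations; t is meant to lie in (0,1].\<close>

definition fp_in :: "('a \<Rightarrow> real) \<Rightarrow> 'a \<Rightarrow> real \<Rightarrow> bool" where
  "fp_in \<mu> x t \<longleftrightarrow> \<mu> x \<ge> t"

definition fp_q :: "real \<Rightarrow> ('a \<Rightarrow> real) \<Rightarrow> 'a \<Rightarrow> real \<Rightarrow> bool" where
  "fp_q k \<mu> x t \<longleftrightarrow> \<mu> x + t + k > 1"

definition fp_in_or_q :: "real \<Rightarrow> ('a \<Rightarrow> real) \<Rightarrow> 'a \<Rightarrow> real \<Rightarrow> bool" where
  "fp_in_or_q k \<mu> x t \<longleftrightarrow> fp_in \<mu> x t \<or> fp_q k \<mu> x t"

definition fuzzy_subset :: "('a \<Rightarrow> real) \<Rightarrow> bool" where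
  "fuzzy_subset \<mu> \<longleftrightarrow> (\<forall>x. 0 \<le> \<mu> x \<and> \<mu> x \<le> 1)"

definition in_inq_fuzzy_fated_filter ::
  "('a::{bounded_lattice, distrib_lattice} \<Rightarrow> 'a \<Rightarrow> 'a) \<Rightarrow> real \<Rightarrow> ('a \<Rightarrow> real) \<Rightarrow> bool" where
  "in_inq_fuzzy_fated_filter imp k \<mu> \<longleftrightarrow>
     fuzzy_subset \<mu> \<and>
     (\<forall>x t. 0 < t \<and> t \<le> 1 \<longrightarrow> fp_in \<mu> x t \<longrightarrow> fp_in_or_q k \<mu> top t) \<and>
     (\<forall>x a y t s. 0 < t \<and> t \<le> 1 \<and> 0 < s \<and> s \<le> 1 \<longrightarrow>
        fp_in \<mu> (imp a (imp (imp x y) x)) t \<longrightarrow> fp_in \<mu> a s \<longrightarrow>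
        fp_in_or_q k \<mu> x (min t s))"

definition in_in_fuzzy_fated_filter ::
  "('a::{bounded_lattice, distrib_lattice} \<Rightarrow> 'a \<Rightarrow> 'a) \<Rightarrow> ('a \<Rightarrow> real) \<Rightarrow> bool" where
  "in_in_fuzzy_fated_filter imp \<mu> \<longleftrightarrow>
     fuzzy_subset \<mu> \<and>
     (\<forall>x t. 0 < t \<and> t \<le> 1 \<longrightarrow> fp_in \<mu> x t \<longrightarrow> fp_in \<mu> top t) \<and>
     (\<forall>x a y t s. 0 < t \<and> t \<le> 1 \<and> 0 < s \<and> s \<le> 1 \<longrightarrow>
        fp_in \<mu> (imp a (imp (imp x y) x)) t \<longrightarrow> fp_in \<mu> a s \<longrightarrow>
        fp_in \<mu> x (min t s))"

end

theory Submission
  imports Defs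
begin

theorem corollary3p9:
  fixes neg :: "'a::{bounded_lattice, distrib_lattice} \<Rightarrow> 'a"
    and imp :: "'a \<Rightarrow> 'a \<Rightarrow> 'a"
    and \<mu> :: "'a \<Rightarrow> real"
    and k :: real
  assumes "R0_algebra neg imp"
    and "0 \<le> k" and "k < 1"
    and "in_inq_fuzzy_fated_filter imp k \<mu>"
    and "\<mu> top < (1 - k) / 2"
  shows "in_in_fuzzy_fated_filter imp \<mu>"
proof -
  define c where "c = (1 - k) / 2"
  have fs: "fuzzy_subset \<mu>" and
    h1: "\<And>x t. 0 < t \<Longrightarrow> t \<le> 1 \<Longrightarrow> \<mu> x \<ge> t \<Longrightarrow> \<mu> top \<ge> t \<or> \<mu> top + t + k > 1" and
    h2: "\<And>x a y t s. 0 < t \<Longrightarrow> t \<le> 1 \<Longrightarrow> 0 < s \<Longrightarrow> s \<le> 1 \<Longrightarrow>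
        \<mu> (imp a (imp (imp x y) x)) \<ge> t \<Longrightarrow> \<mu> a \<ge> s \<Longrightarrow>
        \<mu> x \<ge> min t s \<or> \<mu> x + min t s + k > 1"
    using assms(4) unfolding in_inq_fuzzy_fated_filter_def fp_in_or_q_def fp_in_def fp_q_def
    by blast+
  have rng: "\<And>x. 0 \<le> \<mu> x \<and> \<mu> x \<le> 1" using fs unfolding fuzzy_subset_def by blast
  have c1: "c \<le> 1" "c > 0" using assms(2,3) unfolding c_def by auto
  have top: "\<mu> x \<le> \<mu> top" for x
  proof (rule ccontr)
    assume "\<not> ?thesis"
    hence lt: "\<mu> top < \<mu> x" by simp
    define t where "t = min (\<mu> x) c"
    have "0 < t" "t \<le> 1" "\<mu> x \<ge> t" using lt rng[of top] rng[of x] c1 unfolding t_def by auto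
    from h1[OF this] have "\<mu> top \<ge> t \<or> \<mu> top + t + k > 1" .
    moreover have "\<mu> top < t" using lt assms(5) unfolding t_def c_def by auto
    moreover have "t \<le> c" unfolding t_def by simp
    ultimately show False unfolding c_def by (auto simp: field_simps)
  qed
  have ltc: "\<mu> x < c" for x using top[of x] assms(5) unfolding c_def by linarith
  show ?thesis
    unfolding in_in_fuzzy_fated_filter_def fp_in_def
  proof (intro conjI allI impI)
    show "fuzzy_subset \<mu>" by (rule fs)
  next
    fix x :: 'a and t :: real
    assume "0 < t \<and> t \<le> 1" "t \<le> \<mu> x"
    thus "t \<le> \<mu> top" using top[of x] by linarith
  next
    fix x a y :: 'a and t s :: real
    assume ts: "0 < t \<and> t \<le> 1 \<and> 0 < s \<and> s \<le> 1"
      and A: "t \<le> \<mu> (imp a (imp (imp x y) x))" and B: "s \<le> \<mu> a"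
    have "0 < min t c" "min t c \<le> 1" "0 < min s c" "min s c \<le> 1" using ts c1 by auto
    from h2[OF this, of a x y] A B
    have "\<mu> x \<ge> min (min t c) (min s c) \<or> \<mu> x + min (min t c) (min s c) + k > 1"
      by auto
    moreover have "min (min t c) (min s c) \<le> c" by simp
    ultimately have "\<mu> x \<ge> min (min t c) (min s c)"
    proof -
      assume a1: "\<mu> x \<ge> min (min t c) (min s c) \<or> \<mu> x + min (min t c) (min s c) + k > 1"
        and a2: "min (min t c) (min s c) \<le> c"
      have "2 * c + k = 1" unfolding c_def by (simp add: field_simps)
      then show ?thesis using a1 a2 by linarith
    qed
    thus "min t s \<le> \<mu> x" using ltc[of x] by (smt (verit))
  qed
qed

end
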